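(* Let $r\geqslant 1$ and $n\geqslant 2r$. There exists $\pi\in\mathrm{Sym}_n$ with $w_H(\pi)=2r$ all of whose non-trivial cycles have length $2$ or $3$, such that $I(n,2r,r)=|B_r(\pi)\cap B_r(I_n)|$.
   Context: $\mathrm{Sym}_n$ is the symmetric group on $[n]$, $I_n$ is the identity, $d$ is the Hamming distance $d(\pi,\tau)=|\{i:\pi(i)\neq\tau(i)\}|$, $w_H(\pi)=d(I_n,\pi)$, and $B_r(\pi)=\{\sigma:d(\sigma,\pi)\leqslant r\}$. $I(n,d,r)=\max_{\pi,\tau,\ d(\pi,\tau)=d}|B_r(\pi)\cap B_r(\tau)|$. *)

theory Defs
  imports "HOL-Combinatorics.Combinatorics"
begin

definition Sym :: "nat \<Rightarrow> (nat \<Rightarrow> nat) set" where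
  "Sym n = {p. p permutes {1..n}}"

definition hdist :: "nat \<Rightarrow> (nat \<Rightarrow> nat) \<Rightarrow> (nat \<Rightarrow> nat) \<Rightarrow> nat" where
  "hdist n p q = card {i \<in> {1..n}. p i \<noteq> q i}"

definition wH :: "nat \<Rightarrow> (nat \<Rightarrow> nat) \<Rightarrow> nat" where
  "wH n p = hdist n id p"

definition ball :: "nat \<Rightarrow> nat \<Rightarrow> (nat \<Rightarrow> nat) \<Rightarrow> (nat \<Rightarrow> nat) set" where
  "ball n r p = {s \<in> Sym n. hdist n s p \<le> r}"

definition Inter_max :: "nat \<Rightarrow> nat \<Rightarrow> nat \<Rightarrow> nat" where
  "Inter_max n d r = Max {card (ball n r p \<inter> ball n r q) | p q.
      p \<in> Sym n \<and> q \<in> Sym n \<and> hdist n p q = d}"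

definition cycles_2_3 :: "(nat \<Rightarrow> nat) \<Rightarrow> bool" where
  "cycles_2_3 p \<longleftrightarrow> (\<forall>i. p i \<noteq> i \<longrightarrow> card (orbit p i) \<in> {2, 3})"

end

theory Submission
  imports Defs
begin

lemma hdist_cong:
  assumes "\<And>i. i \<in> {1..n} \<Longrightarrow> (p i \<noteq> q i) = (p' i \<noteq> q' i)"
  shows "hdist n p q = hdist n p' q'"
  unfolding hdist_def using assms by (metis (mono_tags, lifting))

lemma hdist_sym: "hdist n p q = hdist n q p"
  unfolding hdist_def by (rule arg_cong[where f=card]) auto

lemma finite_Sym: "finite (Sym n)"
  unfolding Sym_def by (rule finite_permutations) simp

lemma char:
  assumes sg: "\<sigma> \<in> Sym n" and w: "wH n \<sigma> = 2 * r" and s: "s \<in> Sym n"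
    and d1: "hdist n s \<sigma> \<le> r" and d2: "hdist n s id \<le> r"
  shows "s x = x \<or> s x = \<sigma> x"
proof -
  define A where "A = {i \<in> {1..n}. s i \<noteq> i}"
  define B where "B = {i \<in> {1..n}. s i \<noteq> \<sigma> i}"
  define M where "M = {i \<in> {1..n}. i \<noteq> \<sigma> i}"
  have cA: "card A \<le> r" using d2 unfolding A_def hdist_def by simp
  have cB: "card B \<le> r" using d1 unfolding B_def hdist_def by simp
  have cM: "card M = 2 * r" using w unfolding M_def wH_def hdist_def by simp
  have fin: "finite A" "finite B" unfolding A_def B_def by auto
  have "M \<subseteq> A \<union> B" unfolding M_def A_def B_def by auto
  hence "card M \<le> card (A \<union> B)" using fin by (intro card_mono) auto
  moreover have "card (A \<union> B) + card (A \<inter> B) = card A + card B"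
    using fin by (rule card_Un_Int[symmetric])
  ultimately have "card (A \<inter> B) = 0" using cA cB cM by linarith
  hence AB: "A \<inter> B = {}" using fin by simp
  show ?thesis
  proof (cases "x \<in> {1..n}")
    case True
    then show ?thesis using AB unfolding A_def B_def by blast
  next
    case False
    then show ?thesis using s unfolding Sym_def by (simp add: permutes_not_in)
  qed
qed

lemma propag_step:
  assumes "inj s" "\<forall>x. s x = x \<or> s x = g x" "s x = g x"
  shows "s (g x) = g (g x)"
proof -
  have "s (g x) = g (g x) \<or> s (g x) = g x" using assms(2) by blast
  thus ?thesis
  proof
    assume "s (g x) = g x"
    hence "s (g x) = s x" using assms(3) by simp
    hence "g x = x" using assms(1) by (simp add: inj_eq)
    thus ?thesis using assms(3) by simp
  qed
qed

lemma propag: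
  assumes "inj s" "\<forall>x. s x = x \<or> s x = g x" "s x = g x"
  shows "s ((g ^^ k) x) = g ((g ^^ k) x)"
  by (induction k) (use assms propag_step in auto)

lemma c23:
  assumes p: "\<sigma> permutes S"
    and h: "\<forall>a. \<sigma> a \<noteq> a \<longrightarrow> \<sigma> (\<sigma> a) = a \<or> \<sigma> (\<sigma> (\<sigma> a)) = a"
  shows "cycles_2_3 \<sigma>"
  unfolding cycles_2_3_def
proof (intro allI impI)
  fix i assume ne: "\<sigma> i \<noteq> i"
  have inj: "inj \<sigma>" using p by (rule permutes_inj)
  show "card (orbit \<sigma> i) \<in> {2, 3}"
  proof (cases "\<sigma> (\<sigma> i) = i")
    case True
    have "\<forall>m. (\<sigma> ^^ m) i \<in> {i, \<sigma> i}"
    proof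
      fix m show "(\<sigma> ^^ m) i \<in> {i, \<sigma> i}" by (induction m) (use True in auto)
    qed
    hence "orbit \<sigma> i \<subseteq> {i, \<sigma> i}" unfolding orbit_altdef by blast
    moreover have "{i, \<sigma> i} \<subseteq> orbit \<sigma> i"
      using orbit.base[of \<sigma> i] orbit.step[of "\<sigma> i" \<sigma> i] True by auto
    ultimately have "orbit \<sigma> i = {i, \<sigma> i}" by blast
    then show ?thesis using ne by simp
  next
    case False
    hence T: "\<sigma> (\<sigma> (\<sigma> i)) = i" using h ne by blast
    have "\<forall>m. (\<sigma> ^^ m) i \<in> {i, \<sigma> i, \<sigma> (\<sigma> i)}"
    proof
      fix m show "(\<sigma> ^^ m) i \<in> {i, \<sigma> i, \<sigma> (\<sigma> i)}" by (induction m) (use T in auto)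
    qed
    hence "orbit \<sigma> i \<subseteq> {i, \<sigma> i, \<sigma> (\<sigma> i)}" unfolding orbit_altdef by blast
    moreover have "{i, \<sigma> i, \<sigma> (\<sigma> i)} \<subseteq> orbit \<sigma> i"
      using orbit.base[of \<sigma> i] orbit.step[of "\<sigma> i" \<sigma> i]
        orbit.step[of "\<sigma> (\<sigma> i)" \<sigma> i] T by auto
    ultimately have "orbit \<sigma> i = {i, \<sigma> i, \<sigma> (\<sigma> i)}" by blast
    moreover have "\<sigma> (\<sigma> i) \<noteq> \<sigma> i" using ne inj by (metis injD)
    ultimately show ?thesis using ne False by auto
  qed
qed

lemma split_step:
  assumes sg: "\<sigma> \<in> Sym n" and w: "wH n \<sigma> = 2 * r"
    and a1: "\<sigma> a \<noteq> a" and a2: "\<sigma> (\<sigma> a) \<noteq> a" and a3: "\<sigma> (\<sigma> (\<sigma> a)) \<noteq> a"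
  shows "\<exists>\<tau>\<in>Sym n. wH n \<tau> = 2 * r \<and>
     card {x\<in>{1..n}. \<tau> (\<tau> x) \<noteq> x} < card {x\<in>{1..n}. \<sigma> (\<sigma> x) \<noteq> x} \<and>
     card (ball n r \<sigma> \<inter> ball n r id) \<le> card (ball n r \<tau> \<inter> ball n r id)"
proof -
  have p: "\<sigma> permutes {1..n}" using sg unfolding Sym_def by simp
  have inj: "inj \<sigma>" using p by (rule permutes_inj)
  define z where "z = inv \<sigma> a"
  have sz: "\<sigma> z = a" unfolding z_def using p by (simp add: permutes_inverses)
  define b where "b = \<sigma> a"
  define c where "c = \<sigma> b"
  have za: "z \<noteq> a" using sz a1 by auto
  have bz: "b \<noteq> z" using sz a2 unfolding b_def by auto
  have cz: "c \<noteq> z" using sz a3 unfolding b_def c_def by auto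
  have ca: "c \<noteq> a" using a2 unfolding b_def c_def by auto
  have ab: "a \<noteq> b" using a1 unfolding b_def by auto
  have bc: "b \<noteq> c" using a1 inj unfolding b_def c_def by (metis injD)
  have aS: "a \<in> {1..n}" using a1 p by (meson permutes_not_in)
  have bS: "b \<in> {1..n}" using aS permutes_in_image[OF p, of a] unfolding b_def by blast
  have zS: "z \<in> {1..n}" using aS p sz by (metis permutes_in_image)
  define t where "t = Transposition.transpose b z"
  define \<tau> where "\<tau> = \<sigma> \<circ> t"
  have tp: "t permutes {1..n}" unfolding t_def using bS zS by (rule permutes_swap_id)
  have taup: "\<tau> permutes {1..n}" unfolding \<tau>_def using tp p by (rule permutes_compose)
  have tb: "t b = z" and tz: "t z = b" and to: "\<And>x. x \<noteq> b \<Longrightarrow> x \<noteq> z \<Longrightarrow> t x = x"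
    unfolding t_def by auto
  have taub: "\<tau> b = a" and tauz: "\<tau> z = c" and tauo: "\<And>x. x \<noteq> b \<Longrightarrow> x \<noteq> z \<Longrightarrow> \<tau> x = \<sigma> x"
    unfolding \<tau>_def using tb tz to sz c_def by auto
  have wt: "wH n \<tau> = 2 * r"
  proof -
    have "hdist n id \<tau> = hdist n id \<sigma>"
      apply (rule hdist_cong) subgoal for i by (cases "i = b"; cases "i = z") (use taub tauz tauo ab bc cz za sz c_def in \<open>auto\<close>) done
    thus ?thesis using w unfolding wH_def by simp
  qed
  have meas: "card {x\<in>{1..n}. \<tau> (\<tau> x) \<noteq> x} < card {x\<in>{1..n}. \<sigma> (\<sigma> x) \<noteq> x}"
  proof (rule psubset_card_mono)
    show "finite {x\<in>{1..n}. \<sigma> (\<sigma> x) \<noteq> x}" by simp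
    have taua: "\<tau> a = b" using tauo ab za unfolding b_def by metis
    have sub: "{x\<in>{1..n}. \<tau> (\<tau> x) \<noteq> x} \<subseteq> {x\<in>{1..n}. \<sigma> (\<sigma> x) \<noteq> x}"
    proof (rule subsetI, rule ccontr)
      fix x assume x: "x \<in> {x\<in>{1..n}. \<tau> (\<tau> x) \<noteq> x}" and nx: "x \<notin> {x\<in>{1..n}. \<sigma> (\<sigma> x) \<noteq> x}"
      have ss: "\<sigma> (\<sigma> x) = x" using x nx by auto
      have xb: "x \<noteq> b" using ss ca inj unfolding c_def b_def by (metis injD)
      have xz: "x \<noteq> z" using ss sz bz unfolding b_def by auto
      have sxb: "\<sigma> x \<noteq> b" using ss a2 inj unfolding b_def by (metis injD)
      have sxz: "\<sigma> x \<noteq> z" using ss sz bz inj unfolding b_def by (metis injD)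
      have "\<tau> (\<tau> x) = x" using tauo[OF xb xz] tauo[OF sxb sxz] ss by simp
      thus False using x by simp
    qed
    have "a \<in> {x\<in>{1..n}. \<sigma> (\<sigma> x) \<noteq> x}" using aS a2 by simp
    moreover have "a \<notin> {x\<in>{1..n}. \<tau> (\<tau> x) \<noteq> x}" using taua taub by simp
    ultimately show "{x\<in>{1..n}. \<tau> (\<tau> x) \<noteq> x} \<subset> {x\<in>{1..n}. \<sigma> (\<sigma> x) \<noteq> x}"
      using sub by blast
  qed
  obtain N where N: "(\<sigma> ^^ N) = id" "N > 0"
    using permutation_is_nilpotent permutes_imp_permutation[OF _ p] by blast
  have N2: "N \<ge> 2"
  proof (rule ccontr)
    assume "\<not> N \<ge> 2" hence "N = 1" using N by simp
    thus False using N a1 by simp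
  qed
  have zpow: "z = (\<sigma> ^^ (N - 2)) b"
  proof -
    have "\<sigma> ((\<sigma> ^^ (N - 1)) a) = (\<sigma> ^^ N) a"
      using N2 by (metis Suc_diff_1 N(2) comp_apply funpow.simps(2))
    hence "\<sigma> ((\<sigma> ^^ (N - 1)) a) = \<sigma> z" using N sz by simp
    hence "z = (\<sigma> ^^ (N - 1)) a" using inj by (metis injD)
    also have "\<dots> = (\<sigma> ^^ (N - 2)) b" unfolding b_def using N2
      by (metis Suc_diff_Suc Suc_1 Suc_le_lessD comp_apply diff_Suc_1 funpow_Suc_right)
    finally show ?thesis .
  qed
  define D where "D = ball n r \<sigma> \<inter> ball n r id"
  have Dchar: "\<And>s. s \<in> D \<Longrightarrow> s \<in> Sym n \<and> inj s \<and> (\<forall>x. s x = x \<or> s x = \<sigma> x) \<and>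
      ((s b = c \<and> s z = a) \<or> (s b = b \<and> s z = z))"
  proof -
    fix s assume sD: "s \<in> D"
    have sS: "s \<in> Sym n" and d1: "hdist n s \<sigma> \<le> r" and d2: "hdist n s id \<le> r"
      using sD unfolding D_def ball_def by auto
    have ch: "\<forall>x. s x = x \<or> s x = \<sigma> x" using char[OF sg w sS d1 d2] by blast
    have injs: "inj s" using sS unfolding Sym_def by (simp add: permutes_inj)
    have "(s b = c \<and> s z = a) \<or> (s b = b \<and> s z = z)"
    proof (cases "s b = c")
      case True
      have "s ((\<sigma> ^^ (N - 2)) b) = \<sigma> ((\<sigma> ^^ (N - 2)) b)"
        by (rule propag[OF injs ch]) (use True c_def in simp)
      then show ?thesis using True zpow sz by simp
    next
      case False
      hence sb: "s b = b" using ch c_def by metis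
      have "s z = z"
      proof (rule ccontr)
        assume "s z \<noteq> z" hence "s z = \<sigma> z" using ch by metis
        hence "s (\<sigma> z) = \<sigma> (\<sigma> z)" by (rule propag_step[OF injs ch])
        hence "s a = b" using sz b_def by simp
        hence "s (\<sigma> a) = \<sigma> (\<sigma> a)" using b_def by (intro propag_step[OF injs ch]) simp
        thus False using sb False b_def c_def by simp
      qed
      then show ?thesis using sb by simp
    qed
    thus "s \<in> Sym n \<and> inj s \<and> (\<forall>x. s x = x \<or> s x = \<sigma> x) \<and>
      ((s b = c \<and> s z = a) \<or> (s b = b \<and> s z = z))" using sS injs ch by blast
  qed
  define f where "f s = (if s b = c then s \<circ> t else s)" for s :: "nat \<Rightarrow> nat"
  have "card D \<le> card (ball n r \<tau> \<inter> ball n r id)"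
  proof (rule card_inj_on_le)
    show "finite (ball n r \<tau> \<inter> ball n r id)" using finite_Sym unfolding ball_def by auto
    show "inj_on f D"
    proof (rule inj_onI)
      fix s1 s2 assume s1: "s1 \<in> D" and s2: "s2 \<in> D" and eq: "f s1 = f s2"
      have c1: "(s1 b = c \<and> s1 z = a) \<or> (s1 b = b \<and> s1 z = z)" using Dchar[OF s1] by blast
      have c2: "(s2 b = c \<and> s2 z = a) \<or> (s2 b = b \<and> s2 z = z)" using Dchar[OF s2] by blast
      have fz: "f s1 z = f s2 z" using eq by simp
      show "s1 = s2"
      proof (cases "s1 b = c")
        case T1: True
        show ?thesis
        proof (cases "s2 b = c")
          case True
          have "s1 \<circ> t = s2 \<circ> t" using eq T1 True unfolding f_def by simp
          hence "s1 \<circ> t \<circ> t = s2 \<circ> t \<circ> t" by simp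
          thus ?thesis unfolding t_def by (simp add: comp_assoc)
        next
          case False
          have "f s1 z = c" using T1 tz unfolding f_def by simp
          moreover have "f s2 z = s2 z" using False unfolding f_def by simp
          ultimately show ?thesis using fz c2 False cz ca by auto
        qed
      next
        case F1: False
        show ?thesis
        proof (cases "s2 b = c")
          case True
          have "f s2 z = c" using True tz unfolding f_def by simp
          moreover have "f s1 z = s1 z" using F1 unfolding f_def by simp
          ultimately show ?thesis using fz c1 F1 cz ca by auto
        next
          case False
          then show ?thesis using eq F1 unfolding f_def by simp
        qed
      qed
    qed
    show "f ` D \<subseteq> ball n r \<tau> \<inter> ball n r id"
    proof
      fix y assume "y \<in> f ` D"
      then obtain s where sD: "s \<in> D" and y: "y = f s" by blast
      have sS: "s \<in> Sym n" and d1: "hdist n s \<sigma> \<le> r" and d2: "hdist n s id \<le> r"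
        using sD unfolding D_def ball_def by auto
      have cs: "(s b = c \<and> s z = a) \<or> (s b = b \<and> s z = z)" using Dchar[OF sD] by blast
      show "y \<in> ball n r \<tau> \<inter> ball n r id"
      proof (cases "s b = c")
        case True
        hence sz': "s z = a" using cs bc by auto
        have yS: "y \<in> Sym n" using y True sS tp unfolding f_def Sym_def
          by (simp add: permutes_compose)
        have "hdist n y \<tau> = hdist n s \<sigma>"
          apply (rule hdist_cong) subgoal for i by (cases "i = b"; cases "i = z") (use True sz' sz y tb tz to c_def in \<open>auto simp: f_def \<tau>_def\<close>) done
        moreover have "hdist n y id = hdist n s id"
          apply (rule hdist_cong) subgoal for i by (cases "i = b"; cases "i = z") (use True sz' y tb tz to ab bc cz za in \<open>auto simp: f_def\<close>) done
        ultimately show ?thesis using yS d1 d2 unfolding ball_def by simp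
      next
        case False
        hence sb: "s b = b" and sz': "s z = z" using cs by auto
        have ys: "y = s" using y False unfolding f_def by simp
        have "hdist n y \<tau> = hdist n s \<sigma>"
          apply (rule hdist_cong) subgoal for i by (cases "i = b"; cases "i = z") (use sb sz' sz ys taub tauz tauo ab bc cz za c_def in \<open>auto\<close>) done
        thus ?thesis using sS d1 d2 ys unfolding ball_def by simp
      qed
    qed
  qed
  then show ?thesis using taup wt meas unfolding D_def Sym_def by blast
qed

lemma reduce:
  "\<forall>\<sigma>. \<sigma> \<in> Sym n \<longrightarrow> wH n \<sigma> = 2 * r \<longrightarrow> card {x\<in>{1..n}. \<sigma> (\<sigma> x) \<noteq> x} = m \<longrightarrow>
     (\<exists>\<tau>\<in>Sym n. wH n \<tau> = 2 * r \<and> cycles_2_3 \<tau> \<and>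
        card (ball n r \<sigma> \<inter> ball n r id) \<le> card (ball n r \<tau> \<inter> ball n r id))"
proof (induction m rule: less_induct)
  case (less m)
  show ?case
  proof (intro allI impI)
    fix \<sigma> assume sg: "\<sigma> \<in> Sym n" and w: "wH n \<sigma> = 2 * r"
      and m: "card {x\<in>{1..n}. \<sigma> (\<sigma> x) \<noteq> x} = m"
    show "\<exists>\<tau>\<in>Sym n. wH n \<tau> = 2 * r \<and> cycles_2_3 \<tau> \<and>
        card (ball n r \<sigma> \<inter> ball n r id) \<le> card (ball n r \<tau> \<inter> ball n r id)"
    proof (cases "\<exists>a. \<sigma> a \<noteq> a \<and> \<sigma> (\<sigma> a) \<noteq> a \<and> \<sigma> (\<sigma> (\<sigma> a)) \<noteq> a")
      case True
      then obtain a where a: "\<sigma> a \<noteq> a" "\<sigma> (\<sigma> a) \<noteq> a" "\<sigma> (\<sigma> (\<sigma> a)) \<noteq> a" by blast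
      obtain \<tau> where t: "\<tau> \<in> Sym n" "wH n \<tau> = 2 * r"
        "card {x\<in>{1..n}. \<tau> (\<tau> x) \<noteq> x} < card {x\<in>{1..n}. \<sigma> (\<sigma> x) \<noteq> x}"
        "card (ball n r \<sigma> \<inter> ball n r id) \<le> card (ball n r \<tau> \<inter> ball n r id)"
        using split_step[OF sg w a] by blast
      obtain \<rho> where "\<rho> \<in> Sym n" "wH n \<rho> = 2 * r" "cycles_2_3 \<rho>"
        "card (ball n r \<tau> \<inter> ball n r id) \<le> card (ball n r \<rho> \<inter> ball n r id)"
        using less[rule_format, OF _ t(1) t(2) refl] t(3) m by blast
      then show ?thesis using t(4) by (meson le_trans)
    next
      case False
      have "cycles_2_3 \<sigma>" using sg False unfolding Sym_def by (intro c23) auto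
      then show ?thesis using sg w by blast
    qed
  qed
qed

definition sig0 :: "nat \<Rightarrow> nat \<Rightarrow> nat" where
  "sig0 r x = (if 1 \<le> x \<and> x \<le> 2 * r then (if odd x then x + 1 else x - 1) else x)"

lemma sig0_inv: "sig0 r (sig0 r x) = x"
  unfolding sig0_def by (auto; presburger)

lemma sig0_Sym: assumes "2 * r \<le> n" shows "sig0 r \<in> Sym n"
  unfolding Sym_def permutes_def
proof (intro CollectI conjI allI impI)
  fix x assume "x \<notin> {1..n}" thus "sig0 r x = x" using assms unfolding sig0_def by auto
next
  fix y show "\<exists>!x. sig0 r x = y"
    by (rule ex1I[of _ "sig0 r y"]) (use sig0_inv in metis)+
qed

lemma sig0_wH: assumes "2 * r \<le> n" shows "wH n (sig0 r) = 2 * r"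
proof -
  have "{i \<in> {1..n}. id i \<noteq> sig0 r i} = {1..2*r}"
    using assms unfolding sig0_def by (auto; presburger)
  thus ?thesis unfolding wH_def hdist_def by simp
qed

lemma translate:
  assumes p: "p \<in> Sym n" and q: "q \<in> Sym n"
  shows "card (ball n r p \<inter> ball n r q) \<le> card (ball n r (inv p \<circ> q) \<inter> ball n r id)"
proof (rule card_inj_on_le)
  have pp: "p permutes {1..n}" using p unfolding Sym_def by simp
  have qp: "q permutes {1..n}" using q unfolding Sym_def by simp
  show "finite (ball n r (inv p \<circ> q) \<inter> ball n r id)" using finite_Sym unfolding ball_def by auto
  show "inj_on (\<lambda>s. inv p \<circ> s) (ball n r p \<inter> ball n r q)"
  proof (rule inj_onI)
    fix s1 s2 assume "inv p \<circ> s1 = inv p \<circ> s2"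
    hence "p \<circ> (inv p \<circ> s1) = p \<circ> (inv p \<circ> s2)" by simp
    thus "s1 = s2" using pp by (simp add: fun_eq_iff permutes_inverses)
  qed
  show "(\<lambda>s. inv p \<circ> s) ` (ball n r p \<inter> ball n r q) \<subseteq> ball n r (inv p \<circ> q) \<inter> ball n r id"
  proof
    fix y assume "y \<in> (\<lambda>s. inv p \<circ> s) ` (ball n r p \<inter> ball n r q)"
    then obtain s where s: "s \<in> Sym n" "hdist n s p \<le> r" "hdist n s q \<le> r" and y: "y = inv p \<circ> s"
      unfolding ball_def by blast
    have sp: "s permutes {1..n}" using s unfolding Sym_def by simp
    have yS: "y \<in> Sym n" unfolding Sym_def y
      using permutes_compose[OF sp permutes_inv[OF pp]] by simp
    have "hdist n y (inv p \<circ> q) = hdist n s q"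
      by (rule hdist_cong) (use pp y in \<open>auto simp: permutes_inverses permutes_inv_eq\<close>)
    moreover have "hdist n y id = hdist n s p"
      by (rule hdist_cong) (use pp y in \<open>auto simp: permutes_inverses permutes_inv_eq\<close>)
    ultimately show "y \<in> ball n r (inv p \<circ> q) \<inter> ball n r id" using yS s unfolding ball_def by simp
  qed
qed

lemma translate_w:
  assumes p: "p \<in> Sym n" and q: "q \<in> Sym n"
  shows "inv p \<circ> q \<in> Sym n \<and> wH n (inv p \<circ> q) = hdist n p q"
proof
  have pp: "p permutes {1..n}" using p unfolding Sym_def by simp
  have qp: "q permutes {1..n}" using q unfolding Sym_def by simp
  show "inv p \<circ> q \<in> Sym n" unfolding Sym_def
    using permutes_compose[OF qp permutes_inv[OF pp]] by simp
  show "wH n (inv p \<circ> q) = hdist n p q" unfolding wH_def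
    apply (rule hdist_cong) subgoal for i
      using permutes_inverses[OF pp, of i] permutes_inverses[OF pp, of "q i"] by (metis comp_apply id_apply) done
qed

theorem lemma9:
  fixes n r :: nat
  assumes "r \<ge> 1" and "n \<ge> 2 * r"
  shows "\<exists>p \<in> Sym n. wH n p = 2 * r \<and> cycles_2_3 p \<and>
           Inter_max n (2 * r) r = card (ball n r p \<inter> ball n r id)"
proof -
  define C where "C = {\<tau> \<in> Sym n. wH n \<tau> = 2 * r \<and> cycles_2_3 \<tau>}"
  define g where "g \<tau> = card (ball n r \<tau> \<inter> ball n r id)" for \<tau>
  have red: "\<And>\<sigma>. \<sigma> \<in> Sym n \<Longrightarrow> wH n \<sigma> = 2 * r \<Longrightarrow> \<exists>\<tau>\<in>C. g \<sigma> \<le> g \<tau>"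
    using reduce unfolding C_def g_def by blast
  have finC: "finite C" using finite_Sym unfolding C_def by auto
  have neC: "C \<noteq> {}" using red[OF sig0_Sym[OF assms(2)] sig0_wH[OF assms(2)]] by blast
  obtain \<tau>0 where t0: "\<tau>0 \<in> C" "g \<tau>0 = Max (g ` C)"
  proof -
    have "Max (g ` C) \<in> g ` C" using finC neC by (intro Max_in) auto
    then obtain \<tau> where "\<tau> \<in> C" "g \<tau> = Max (g ` C)" by (metis imageE)
    thus ?thesis using that by blast
  qed
  have tmax: "\<And>\<tau>. \<tau> \<in> C \<Longrightarrow> g \<tau> \<le> g \<tau>0" using t0 finC by simp
  define Q where "Q = {card (ball n r p \<inter> ball n r q) | p q.
      p \<in> Sym n \<and> q \<in> Sym n \<and> hdist n p q = 2 * r}"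
  have "Inter_max n (2 * r) r = g \<tau>0"
    unfolding Inter_max_def Q_def[symmetric]
  proof (rule Max_eqI)
    have "Q \<subseteq> (\<lambda>(p, q). card (ball n r p \<inter> ball n r q)) ` (Sym n \<times> Sym n)"
      unfolding Q_def by auto
    moreover have "finite ((\<lambda>(p, q). card (ball n r p \<inter> ball n r q)) ` (Sym n \<times> Sym n))"
      using finite_Sym by simp
    ultimately show "finite Q" by (rule finite_subset)
    have "id \<in> Sym n" unfolding Sym_def by (simp add: permutes_id)
    moreover have "hdist n \<tau>0 id = 2 * r" using t0(1) hdist_sym[of n \<tau>0 id] unfolding C_def wH_def by simp
    ultimately show "g \<tau>0 \<in> Q" using t0(1) unfolding Q_def g_def C_def by blast
    fix y assume "y \<in> Q"
    then obtain p q where pq: "p \<in> Sym n" "q \<in> Sym n" "hdist n p q = 2 * r"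
      and y: "y = card (ball n r p \<inter> ball n r q)" unfolding Q_def by blast
    have "y \<le> g (inv p \<circ> q)" using translate[OF pq(1,2)] y unfolding g_def by simp
    moreover obtain \<tau> where "\<tau> \<in> C" "g (inv p \<circ> q) \<le> g \<tau>"
      using red[of "inv p \<circ> q"] translate_w[OF pq(1,2)] pq(3) by auto
    ultimately show "y \<le> g \<tau>0" using tmax by (meson le_trans)
  qed
  thus ?thesis using t0(1) unfolding C_def g_def by blast
qed

end
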